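(* Let $\Gamma$ be a graph on $v$ vertices with adjacency matrix $A$ and Seidel matrix $S = J - I - 2A$, and suppose the switching class of $\Gamma$ is a regular two-graph, i.e. $S$ has exactly two distinct eigenvalues, written as $-1-2\sigma$ and $-1-2\tau$, with respective multiplicities $m_\sigma$ and $m_\tau$. Suppose $\Gamma$ has $e$ edges. Then the adjacency spectrum of $\Gamma$ (as a multiset) is $\{\rho_1^{(1)}, \rho_2^{(1)}, \sigma^{(m_\sigma - 1)}, \tau^{(m_\tau - 1)}\}$ for some real numbers $\rho_1,\rho_2$ (not necessarily distinct from each other or from $\sigma$ or $\tau$), and the following equations hold: $$m_\sigma + m_\tau = v,\quad m_\sigma\sigma + m_\tau\tau = -v/2,\quad m_\sigma\sigma^2 + m_\tau\tau^2 = v^2/4,$$ $$\rho_1+\rho_2 = \sigma+\tau+v/2 = -2\sigma\tau,\qquad \rho_1^2+\rho_2^2 = \sigma^2+\tau^2+2e - v^2/4.$$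
   Context: Graphs are finite, simple and undirected; $J$ is the all-ones matrix and $I$ the identity matrix of order $v$; the exponent $(m)$ denotes multiplicity. For a graph $\Gamma$ with vertex set $V$ and a partition $\Pi=\{U,W\}$ of $V$ (one part possibly empty), Seidel switching gives the graph $\Gamma^\Pi$ on $V$ in which two distinct vertices are adjacent iff either they are adjacent in $\Gamma$ and lie in the same part, or they are non-adjacent in $\Gamma$ and lie in different parts. The switching class (two-graph) $[\Gamma]$ is the set of all $\Gamma^\Pi$. The two-graph $[\Gamma]$ is called regular if the Seidel matrix $S(\Gamma)=J-I-2A$ has exactly two distinct eigenvalues (this is independent of the chosen graph in the class). *)

theory Defs
  imports "Jordan_Normal_Form.Char_Poly"
begin

(* Simple graph on vertex set {0..<v}: E symmetric and irreflexive. *)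

definition adj_mat :: "nat \<Rightarrow> (nat \<Rightarrow> nat \<Rightarrow> bool) \<Rightarrow> real mat" where
  "adj_mat v E = mat v v (\<lambda>(i,j). if E i j then 1 else 0)"

definition seidel_mat :: "nat \<Rightarrow> (nat \<Rightarrow> nat \<Rightarrow> bool) \<Rightarrow> real mat" where
  "seidel_mat v E = mat v v (\<lambda>(i,j). 1) - 1\<^sub>m v - 2 \<cdot>\<^sub>m adj_mat v E"

definition num_edges :: "nat \<Rightarrow> (nat \<Rightarrow> nat \<Rightarrow> bool) \<Rightarrow> nat" where
  "num_edges v E = card {(i,j). i < j \<and> j < v \<and> E i j}"

definition has_spectrum :: "real mat \<Rightarrow> real multiset \<Rightarrow> bool" where
  "has_spectrum A M \<longleftrightarrow> char_poly A = (\<Prod>x\<in>#M. [:-x, 1:])"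

end

theory Submission
  imports Defs "Jordan_Normal_Form.Schur_Decomposition"
begin


lemma sym_real_root:
  fixes M :: "real mat"
  assumes M: "M \<in> carrier_mat n n" and sym: "\<And>i j. i < n \<Longrightarrow> j < n \<Longrightarrow> M $$ (i,j) = M $$ (j,i)"
    and z: "poly (map_poly complex_of_real (char_poly M)) z = 0"
  shows "Im z = 0"
proof -
  define Mc where "Mc = map_mat complex_of_real M"
  have Mc: "Mc \<in> carrier_mat n n" using M by (simp add: Mc_def)
  have "char_poly Mc = map_poly complex_of_real (char_poly M)"
    unfolding Mc_def by (rule of_real_hom.char_poly_hom[OF M])
  with z have "eigenvalue Mc z" using eigenvalue_root_char_poly[OF Mc] by simp
  then obtain x where x: "x \<in> carrier_vec n" "x \<noteq> 0\<^sub>v n" "Mc *\<^sub>v x = z \<cdot>\<^sub>v x"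
    unfolding eigenvalue_def eigenvector_def using Mc by auto
  define s where "s = (\<Sum>i<n. cnj (x$i) * (\<Sum>j<n. complex_of_real (M$$(i,j)) * x$j))"
  have mv: "(Mc *\<^sub>v x)$i = (\<Sum>j<n. complex_of_real (M$$(i,j)) * x$j)" if "i < n" for i
    using x(1) M that by (simp add: Mc_def scalar_prod_def atLeast0LessThan)
  have ev: "(Mc *\<^sub>v x)$i = z * x$i" if "i < n" for i
    using x(1) that by (simp add: x(3))
  have "s = (\<Sum>i<n. cnj (x$i) * (z * x$i))"
    unfolding s_def by (intro sum.cong refl) (simp add: mv[symmetric] ev)
  also have "\<dots> = z * (\<Sum>i<n. cnj (x$i) * x$i)"
    by (simp add: sum_distrib_left algebra_simps)
  finally have s1: "s = z * (\<Sum>i<n. cnj (x$i) * x$i)" .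
  have "cnj s = (\<Sum>i<n. x$i * (\<Sum>j<n. complex_of_real (M$$(i,j)) * cnj (x$j)))"
    unfolding s_def by (simp add: cnj_sum)
  also have "\<dots> = (\<Sum>i<n. \<Sum>j<n. x$i * complex_of_real (M$$(i,j)) * cnj (x$j))"
    by (simp add: sum_distrib_left algebra_simps)
  also have "\<dots> = (\<Sum>j<n. \<Sum>i<n. x$i * complex_of_real (M$$(i,j)) * cnj (x$j))"
    by (rule sum.swap)
  also have "\<dots> = s"
    unfolding s_def using sym
    by (intro sum.cong refl) (auto simp: sum_distrib_left algebra_simps)
  finally have cs: "cnj s = s" .
  have "Im (cnj s) = Im s" using cs by simp
  hence "Im s = 0" by simp
  define r where "r = (\<Sum>i<n. (cmod (x$i))^2)"
  have r: "(\<Sum>i<n. cnj (x$i) * x$i) = complex_of_real r"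
    unfolding r_def of_real_sum
    by (intro sum.cong refl) (simp add: complex_norm_square[symmetric] mult.commute)
  obtain i where i: "i < n" "x $ i \<noteq> 0" using x by (metis carrier_vecD eq_vecI index_zero_vec(1,2))
  have "r > 0" unfolding r_def
    by (rule sum_pos2[of _ i]) (use i in auto)
  have "Im s = Im z * r" using s1 r by simp
  with \<open>Im s = 0\<close> \<open>r > 0\<close> show ?thesis by simp
qed

lemma sym_split:
  fixes M :: "real mat"
  assumes M: "M \<in> carrier_mat n n" and sym: "\<And>i j. i < n \<Longrightarrow> j < n \<Longrightarrow> M $$ (i,j) = M $$ (j,i)"
  shows "\<exists>es. char_poly M = (\<Prod>e\<leftarrow>es. [:-e, 1:]) \<and> length es = n"
proof -
  define Mc where "Mc = map_mat complex_of_real M"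
  have Mc: "Mc \<in> carrier_mat n n" using M by (simp add: Mc_def)
  have cp: "char_poly Mc = map_poly complex_of_real (char_poly M)"
    unfolding Mc_def by (rule of_real_hom.char_poly_hom[OF M])
  obtain as where as: "char_poly Mc = (\<Prod>a\<leftarrow>as. [:-a, 1:])" "length as = n"
    using char_poly_factorized[OF Mc] by blast
  have "\<forall>a\<in>set as. Im a = 0"
  proof
    fix a assume "a \<in> set as"
    hence "poly (char_poly Mc) a = 0" unfolding as(1) by (simp add: poly_prod_list_zero_iff)
    thus "Im a = 0" using sym_real_root[OF M sym] cp by simp
  qed
  define es where "es = map Re as"
  interpret mp: map_poly_inj_comm_ring_hom "complex_of_real" ..
  have lin: "map_poly complex_of_real [:- Re a, 1:] = [:-a,1:]" if "Im a = 0" for a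
    using that by (simp add: complex_eq_iff)
  have "map_poly complex_of_real (\<Prod>e\<leftarrow>es. [:-e, 1:]) = (\<Prod>a\<leftarrow>as. [:-a, 1:])"
    unfolding es_def using \<open>\<forall>a\<in>set as. Im a = 0\<close>
  proof (induction as)
    case (Cons a as)
    have "map_poly complex_of_real (\<Prod>e\<leftarrow>map Re (a#as). [:-e, 1:])
      = map_poly complex_of_real [:- Re a, 1:] * map_poly complex_of_real (\<Prod>e\<leftarrow>map Re as. [:-e, 1:])"
      by (simp only: list.map prod_list.Cons mp.hom_mult)
    also have "\<dots> = [:-a,1:] * (\<Prod>a\<leftarrow>as. [:-a, 1:])" using Cons lin by simp
    finally show ?case by simp
  qed simp
  hence "map_poly complex_of_real (char_poly M) = map_poly complex_of_real (\<Prod>e\<leftarrow>es. [:-e, 1:])"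
    using cp as by simp
  hence "char_poly M = (\<Prod>e\<leftarrow>es. [:-e, 1:])" by (rule mp.injectivity)
  thus ?thesis using as es_def by (intro exI[of _ es]) auto
qed


definition tr :: "real mat \<Rightarrow> real" where
  "tr M = (\<Sum>i<dim_row M. M $$ (i,i))"

lemma tr_comm:
  assumes A: "A \<in> carrier_mat n m" and B: "B \<in> carrier_mat m n"
  shows "tr (A * B) = tr (B * A)"
proof -
  have "tr (A*B) = (\<Sum>i<n. \<Sum>k<m. A$$(i,k) * B$$(k,i))"
    using A B by (simp add: tr_def scalar_prod_def atLeast0LessThan)
  also have "\<dots> = (\<Sum>k<m. \<Sum>i<n. B$$(k,i) * A$$(i,k))"
    by (subst sum.swap) (simp add: mult.commute)
  also have "\<dots> = tr (B*A)"
    using A B by (simp add: tr_def scalar_prod_def atLeast0LessThan)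
  finally show ?thesis .
qed

lemma tr_sim:
  assumes "P \<in> carrier_mat n n" "Q \<in> carrier_mat n n" "X \<in> carrier_mat n n" "Q * P = 1\<^sub>m n"
  shows "tr (P * X * Q) = tr X"
proof -
  have "tr (P * X * Q) = tr (Q * (P * X))" using assms by (intro tr_comm) auto
  also have "Q * (P * X) = (Q * P) * X" using assms by (simp add: assoc_mult_mat[symmetric, of Q n n P n X n])
  finally show ?thesis using assms by simp
qed

lemma ut_mult:
  assumes U: "U \<in> carrier_mat n n" and V: "V \<in> carrier_mat n n"
    and uU: "upper_triangular U" and uV: "upper_triangular V"
  shows "upper_triangular (U * V)" "\<And>i. i < n \<Longrightarrow> (U*V) $$ (i,i) = U$$(i,i) * V$$(i,i)"
proof -
  show "upper_triangular (U * V)"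
  proof (rule upper_triangularI)
    fix i j assume i: "i < dim_row (U*V)" and j: "j < i"
    have "(U*V) $$ (i,j) = (\<Sum>k<n. U$$(i,k) * V$$(k,j))"
      using i j U V by (simp add: scalar_prod_def atLeast0LessThan)
    also have "\<dots> = 0"
    proof (rule sum.neutral, intro ballI)
      fix k assume k: "k \<in> {..<n}"
      show "U$$(i,k) * V$$(k,j) = 0"
      proof (cases "k < i")
        case True then show ?thesis using uU U i by (auto simp: upper_triangular_def)
      next
        case False then have "j < k" using j by auto
        then show ?thesis using uV V k by (auto simp: upper_triangular_def)
      qed
    qed
    finally show "(U*V) $$ (i,j) = 0" .
  qed
  fix i assume i: "i < n"
  have "(U*V) $$ (i,i) = (\<Sum>k<n. U$$(i,k) * V$$(k,i))"
    using i U V by (simp add: scalar_prod_def atLeast0LessThan)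
  also have "\<dots> = U$$(i,i) * V$$(i,i)"
  proof -
    have "(\<Sum>k<n. U$$(i,k) * V$$(k,i)) = U$$(i,i) * V$$(i,i) + (\<Sum>k\<in>{..<n}-{i}. U$$(i,k) * V$$(k,i))"
      using i by (subst sum.remove[of _ i]) auto
    also have "(\<Sum>k\<in>{..<n}-{i}. U$$(i,k) * V$$(k,i)) = 0"
    proof (rule sum.neutral, intro ballI)
      fix k assume k: "k \<in> {..<n}-{i}"
      show "U$$(i,k) * V$$(k,i) = 0"
      proof (cases "k < i")
        case True then show ?thesis using uU U i by (auto simp: upper_triangular_def)
      next
        case False then have "i < k" using k by auto
        then show ?thesis using uV V k by (auto simp: upper_triangular_def)
      qed
    qed
    finally show ?thesis by simp
  qed
  finally show "(U*V) $$ (i,i) = U$$(i,i) * V$$(i,i)" .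
qed

lemma sim_prod:
  fixes P :: "real mat"
  assumes P: "P \<in> carrier_mat n n" and Q: "Q \<in> carrier_mat n n"
    and X: "X \<in> carrier_mat n n" and Y: "Y \<in> carrier_mat n n" and QP: "Q * P = 1\<^sub>m n"
  shows "(P * X * Q) * (P * Y * Q) = P * (X * Y) * Q"
proof -
  have "(P * X * Q) * (P * Y * Q) = P * (X * ((Q * P) * (Y * Q)))"
    using P Q X Y by (simp add: assoc_mult_mat[of _ n n _ n _ n])
  also have "\<dots> = P * (X * (Y * Q))" using QP Y Q left_mult_one_mat[of "Y*Q" n n] by simp
  also have "\<dots> = P * (X * Y) * Q" using P Q X Y by (simp add: assoc_mult_mat[of _ n n _ n _ n])
  finally show ?thesis .
qed

lemma sim_shift:
  assumes P: "P \<in> carrier_mat n n" and Q: "Q \<in> carrier_mat n n"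
    and U: "U \<in> carrier_mat n n" and PQ: "P * Q = 1\<^sub>m n"
  shows "P * (U - a \<cdot>\<^sub>m 1\<^sub>m n) * Q = P * U * Q - (a::real) \<cdot>\<^sub>m 1\<^sub>m n"
proof -
  have "P * (U - a \<cdot>\<^sub>m 1\<^sub>m n) = P * U - a \<cdot>\<^sub>m P"
    using P U mult_smult_distrib[of P n n "1\<^sub>m n" n a] by (simp add: mult_minus_distrib_mat[of _ n n])
  moreover have "(P * U - a \<cdot>\<^sub>m P) * Q = P * U * Q - a \<cdot>\<^sub>m (P * Q)"
    using P U Q by (simp add: minus_mult_distrib_mat[of _ n n] mult_smult_assoc_mat[of _ n n])
  ultimately show ?thesis using PQ by simp
qed

lemma ut_shift:
  assumes U: "U \<in> carrier_mat n n" and "upper_triangular U"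
  shows "upper_triangular (U - (a::real) \<cdot>\<^sub>m 1\<^sub>m n)" "U - a \<cdot>\<^sub>m 1\<^sub>m n \<in> carrier_mat n n"
    "\<And>i. i < n \<Longrightarrow> (U - a \<cdot>\<^sub>m 1\<^sub>m n) $$ (i,i) = U $$ (i,i) - a"
  using assms by (auto simp: upper_triangular_def)

lemma schur_obtain:
  fixes M :: "real mat"
  assumes M: "M \<in> carrier_mat n n" and cp: "char_poly M = (\<Prod>a\<leftarrow>as. [:-a, 1:])"
  obtains U P Q where "similar_mat_wit M U P Q" "upper_triangular U" "diag_mat U = as"
    "U \<in> carrier_mat n n" "P \<in> carrier_mat n n" "Q \<in> carrier_mat n n"
    "P * Q = 1\<^sub>m n" "Q * P = 1\<^sub>m n" "M = P * U * Q"
proof -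
  obtain U P Q where sd: "schur_decomposition M as = (U,P,Q)" by (cases "schur_decomposition M as") auto
  from schur_decomposition[OF M cp sd] have *: "similar_mat_wit M U P Q" "upper_triangular U" "diag_mat U = as"
    by auto
  from similar_mat_witD2[OF M *(1)] * show ?thesis using that by blast
qed

lemma diag_sum:
  assumes U: "U \<in> carrier_mat n n" and d: "diag_mat U = as"
  shows "sum_list (map f as) = (\<Sum>i<n. f (U $$ (i,i)))"
proof -
  have "sum_list (map f as) = sum_list (map (\<lambda>i. f (U $$ (i,i))) [0..<n])"
    using U d by (auto simp: diag_mat_def o_def)
  also have "\<dots> = (\<Sum>i<n. f (U $$ (i,i)))"
    by (simp add: sum_set_upt_conv_sum_list_nat[symmetric] atLeast0LessThan o_def)
  finally show ?thesis .
qed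

lemma diag_set:
  assumes U: "U \<in> carrier_mat n n" and d: "diag_mat U = as" and i: "i < n"
  shows "U $$ (i,i) \<in> set as"
  using assms by (auto simp: diag_mat_def)

lemma tr_square_sym:
  assumes N: "N \<in> carrier_mat n n" and sym: "\<And>i j. i < n \<Longrightarrow> j < n \<Longrightarrow> N $$ (i,j) = N $$ (j,i)"
  shows "tr (N * N) = (\<Sum>i<n. \<Sum>k<n. (N $$ (i,k))^2)"
  using N sym by (auto simp: tr_def scalar_prod_def atLeast0LessThan power2_eq_square intro!: sum.cong)

lemma schur_tr:
  fixes M :: "real mat"
  assumes M: "M \<in> carrier_mat n n" and cp: "char_poly M = (\<Prod>a\<leftarrow>as. [:-a, 1:])"
  shows "tr M = sum_list as" "tr (M * M) = sum_list (map (\<lambda>a. a^2) as)"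
proof -
  obtain U P Q where U: "similar_mat_wit M U P Q" "upper_triangular U" "diag_mat U = as"
    "U \<in> carrier_mat n n" "P \<in> carrier_mat n n" "Q \<in> carrier_mat n n"
    "P * Q = 1\<^sub>m n" "Q * P = 1\<^sub>m n" "M = P * U * Q"
    using schur_obtain[OF M cp] by blast
  have "tr M = tr U" using U tr_sim by metis
  also have "\<dots> = sum_list as" using diag_sum[OF U(4,3), of "\<lambda>x. x"] U(4) by (simp add: tr_def)
  finally show "tr M = sum_list as" .
  have "M * M = P * (U * U) * Q" using U sim_prod by metis
  hence "tr (M * M) = tr (U * U)" using U tr_sim[of P n Q "U*U"] by simp
  also have "\<dots> = (\<Sum>i<n. (U $$ (i,i))^2)"
    using ut_mult[OF U(4) U(4) U(2) U(2)] U(4) by (simp add: tr_def power2_eq_square)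
  also have "\<dots> = sum_list (map (\<lambda>a. a^2) as)" using diag_sum[OF U(4,3), of "\<lambda>a. a^2"] by simp
  finally show "tr (M * M) = sum_list (map (\<lambda>a. a^2) as)" .
qed

lemma schur_quad:
  fixes M :: "real mat"
  assumes M: "M \<in> carrier_mat n n" and cp: "char_poly M = (\<Prod>a\<leftarrow>as. [:-a, 1:])"
    and sym: "\<And>i j. i < n \<Longrightarrow> j < n \<Longrightarrow> M $$ (i,j) = M $$ (j,i)"
    and set: "set as \<subseteq> {a, b}"
  shows "(M - a \<cdot>\<^sub>m 1\<^sub>m n) * (M - b \<cdot>\<^sub>m 1\<^sub>m n) = 0\<^sub>m n n"
proof -
  obtain U P Q where U: "similar_mat_wit M U P Q" "upper_triangular U" "diag_mat U = as"
    "U \<in> carrier_mat n n" "P \<in> carrier_mat n n" "Q \<in> carrier_mat n n"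
    "P * Q = 1\<^sub>m n" "Q * P = 1\<^sub>m n" "M = P * U * Q"
    using schur_obtain[OF M cp] by blast
  define X where "X = U - a \<cdot>\<^sub>m 1\<^sub>m n"
  define Y where "Y = U - b \<cdot>\<^sub>m 1\<^sub>m n"
  define W where "W = X * Y"
  define N where "N = (M - a \<cdot>\<^sub>m 1\<^sub>m n) * (M - b \<cdot>\<^sub>m 1\<^sub>m n)"
  have X: "X \<in> carrier_mat n n" "upper_triangular X" "\<And>i. i < n \<Longrightarrow> X $$ (i,i) = U $$ (i,i) - a"
    unfolding X_def using ut_shift[OF U(4,2)] by auto
  have Y: "Y \<in> carrier_mat n n" "upper_triangular Y" "\<And>i. i < n \<Longrightarrow> Y $$ (i,i) = U $$ (i,i) - b"
    unfolding Y_def using ut_shift[OF U(4,2)] by auto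
  have W: "W \<in> carrier_mat n n" "upper_triangular W" "\<And>i. i < n \<Longrightarrow> W $$ (i,i) = 0"
  proof -
    show "W \<in> carrier_mat n n" using X Y W_def by auto
    show "upper_triangular W" unfolding W_def by (rule ut_mult[OF X(1) Y(1) X(2) Y(2)])
    fix i assume i: "i < n"
    have "U $$ (i,i) \<in> {a,b}" using diag_set[OF U(4,3) i] set by auto
    thus "W $$ (i,i) = 0" unfolding W_def using ut_mult(2)[OF X(1) Y(1) X(2) Y(2) i] X(3)[OF i] Y(3)[OF i]
      by auto
  qed
  have "N = (P * X * Q) * (P * Y * Q)"
    unfolding N_def X_def Y_def using sim_shift[OF U(5,6,4,7)] U(9) by simp
  also have "\<dots> = P * W * Q" unfolding W_def by (rule sim_prod[OF U(5,6) X(1) Y(1) U(8)])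
  finally have NW: "N = P * W * Q" .
  have Nc: "N \<in> carrier_mat n n" unfolding N_def using M by auto
  have "N * N = P * (W * W) * Q" unfolding NW by (rule sim_prod[OF U(5,6) W(1) W(1) U(8)])
  hence "tr (N * N) = tr (W * W)" using tr_sim[OF U(5,6) _ U(8), of "W*W"] W(1) by simp
  also have "\<dots> = 0" using ut_mult(2)[OF W(1) W(1) W(2) W(2)] W W(1) by (simp add: tr_def)
  finally have tr0: "tr (N * N) = 0" .
  have e: "N $$ (p,q) = (\<Sum>l<n. M$$(p,l) * M$$(l,q)) - (a+b) * M$$(p,q) + (if p = q then a*b else 0)"
    if "p < n" "q < n" for p q
  proof -
    have "N $$ (p,q) = (\<Sum>l<n. (M$$(p,l) - a * (if p = l then 1 else 0)) * (M$$(l,q) - b * (if l = q then 1 else 0)))"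
      unfolding N_def using M that by (simp add: scalar_prod_def atLeast0LessThan)
    also have "\<dots> = (\<Sum>l<n. M$$(p,l) * M$$(l,q) - (if l = q then b * M$$(p,l) else 0)
        - (if l = p then a * M$$(l,q) else 0) + (if l = p then (if p = q then a*b else 0) else 0))"
      by (intro sum.cong refl) (auto simp: algebra_simps)
    also have "\<dots> = (\<Sum>l<n. M$$(p,l) * M$$(l,q)) - (\<Sum>l<n. (if l = q then b * M$$(p,l) else 0))
        - (\<Sum>l<n. (if l = p then a * M$$(l,q) else 0)) + (\<Sum>l<n. (if l = p then (if p = q then a*b else 0) else 0))"
      by (simp only: sum.distrib sum_subtractf)
    also have "\<dots> = (\<Sum>l<n. M$$(p,l) * M$$(l,q)) - (a+b) * M$$(p,q) + (if p = q then a*b else 0)"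
      using that by (simp add: sum.delta algebra_simps)
    finally show ?thesis .
  qed
  have Nsym: "N $$ (i,j) = N $$ (j,i)" if "i < n" "j < n" for i j
  proof -
    show ?thesis using e[OF that] e[OF that(2,1)] sym that
      by (auto simp: mult.commute intro!: sum.cong)
  qed
  have "(\<Sum>i<n. \<Sum>k<n. (N $$ (i,k))^2) = 0" using tr0 tr_square_sym[OF Nc Nsym] by simp
  hence "\<forall>i\<in>{..<n}. \<forall>k\<in>{..<n}. (N $$ (i,k))^2 = 0"
    by (simp add: sum_nonneg_eq_0_iff sum_nonneg)
  hence "N = 0\<^sub>m n n" using Nc by (intro eq_matI) auto
  thus ?thesis unfolding N_def .
qed


lemma det_rank_one:
  fixes U W :: "real mat"
  assumes U: "U \<in> carrier_mat n 1" and W: "W \<in> carrier_mat 1 n" and d: "d \<noteq> 0"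
  shows "det (d \<cdot>\<^sub>m 1\<^sub>m n - U * W) * d = d ^ n * (d - (W * U) $$ (0,0))"
proof -
  define c where "c = (W * U) $$ (0,0)"
  define L1 where "L1 = four_block_mat (d \<cdot>\<^sub>m 1\<^sub>m n - U * W) U (0\<^sub>m 1 n) (1\<^sub>m 1)"
  define R1 where "R1 = four_block_mat (1\<^sub>m n) (0\<^sub>m n 1) W (1\<^sub>m 1)"
  define L2 where "L2 = four_block_mat (1\<^sub>m n) (0\<^sub>m n 1) ((1/d) \<cdot>\<^sub>m W) (1\<^sub>m 1)"
  define R2 where "R2 = four_block_mat (d \<cdot>\<^sub>m 1\<^sub>m n) U (0\<^sub>m 1 n) (1\<^sub>m 1 - (1/d) \<cdot>\<^sub>m (W * U))"
  define T where "T = four_block_mat (d \<cdot>\<^sub>m 1\<^sub>m n) U W (1\<^sub>m 1)"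
  have UW: "U * W \<in> carrier_mat n n" using U W by auto
  have WU: "W * U \<in> carrier_mat 1 1" using U W by auto
  have "L1 * R1 = four_block_mat ((d \<cdot>\<^sub>m 1\<^sub>m n - U * W) * 1\<^sub>m n + U * W)
      ((d \<cdot>\<^sub>m 1\<^sub>m n - U * W) * 0\<^sub>m n 1 + U * 1\<^sub>m 1) (0\<^sub>m 1 n * 1\<^sub>m n + 1\<^sub>m 1 * W)
      (0\<^sub>m 1 n * 0\<^sub>m n 1 + 1\<^sub>m 1 * 1\<^sub>m 1)"
    unfolding L1_def R1_def by (rule mult_four_block_mat, insert U W, auto)
  also have "\<dots> = T" unfolding T_def
    by (intro arg_cong4[where f = four_block_mat] eq_matI, insert U W UW, auto)
  finally have LR1: "L1 * R1 = T" .
  have "L2 * R2 = four_block_mat (1\<^sub>m n * (d \<cdot>\<^sub>m 1\<^sub>m n) + 0\<^sub>m n 1 * 0\<^sub>m 1 n)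
      (1\<^sub>m n * U + 0\<^sub>m n 1 * (1\<^sub>m 1 - (1/d) \<cdot>\<^sub>m (W * U)))
      ((1/d) \<cdot>\<^sub>m W * (d \<cdot>\<^sub>m 1\<^sub>m n) + 1\<^sub>m 1 * 0\<^sub>m 1 n)
      ((1/d) \<cdot>\<^sub>m W * U + 1\<^sub>m 1 * (1\<^sub>m 1 - (1/d) \<cdot>\<^sub>m (W * U)))"
    unfolding L2_def R2_def by (rule mult_four_block_mat, insert U W WU, auto)
  also have "\<dots> = T" unfolding T_def
    by (intro arg_cong4[where f = four_block_mat] eq_matI, insert U W UW WU d, auto)
  finally have LR2: "L2 * R2 = T" .
  have cL1: "L1 \<in> carrier_mat (n+1) (n+1)" unfolding L1_def using U W by auto
  have cR1: "R1 \<in> carrier_mat (n+1) (n+1)" unfolding R1_def using U W by auto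
  have cL2: "L2 \<in> carrier_mat (n+1) (n+1)" unfolding L2_def using U W by auto
  have cR2: "R2 \<in> carrier_mat (n+1) (n+1)" unfolding R2_def using U W by auto
  have dL1: "det L1 = det (d \<cdot>\<^sub>m 1\<^sub>m n - U * W)" unfolding L1_def
    by (subst det_four_block_mat_lower_left_zero[of _ n _ 1], insert U W UW, auto)
  have dR1: "det R1 = 1" unfolding R1_def
    by (subst det_four_block_mat_upper_right_zero[of _ n _ 1], insert U W, auto)
  have dL2: "det L2 = 1" unfolding L2_def
    by (subst det_four_block_mat_upper_right_zero[of _ n _ 1], insert U W, auto)
  have s1: "det (1\<^sub>m 1 - (1/d) \<cdot>\<^sub>m (W * U)) = 1 - c / d"
  proof -
    have c: "1\<^sub>m 1 - (1/d) \<cdot>\<^sub>m (W * U) \<in> carrier_mat 1 1" using WU by (intro minus_carrier_mat smult_carrier_mat)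
    have dd: "dim_row (W * U) = 1" "dim_col (W * U) = 1" using WU by auto
    show ?thesis unfolding det_single[OF c] c_def using dd by simp
  qed
  have dR2: "det R2 = d ^ n * (1 - c / d)" unfolding R2_def
    by (subst det_four_block_mat_lower_left_zero[of _ n _ 1], insert U W WU s1, auto)
  have "det (d \<cdot>\<^sub>m 1\<^sub>m n - U * W) = det T"
    using det_mult[OF cL1 cR1] LR1 dL1 dR1 by simp
  also have "\<dots> = d ^ n * (1 - c / d)"
    using det_mult[OF cL2 cR2] LR2 dL2 dR2 by simp
  finally show ?thesis using d unfolding c_def by (simp add: field_simps)
qed


lemma list_two:
  fixes es :: "real list"
  assumes "set es \<subseteq> {a, b}" and "a \<noteq> b"
  shows "(\<Prod>e\<leftarrow>es. [:-e, 1:]) = [:-a,1:] ^ length (filter ((=) a) es) * [:-b,1:] ^ length (filter ((=) b) es)"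
    "length (filter ((=) a) es) + length (filter ((=) b) es) = length es"
    "sum_list (map f es) = real (length (filter ((=) a) es)) * f a + real (length (filter ((=) b) es)) * f b"
  using assms by (induction es) (auto simp: algebra_simps)

lemma order_two:
  fixes a b :: real
  assumes "a \<noteq> b"
  shows "Polynomial.order a ([:-a,1:] ^ m * [:-b,1:] ^ k) = m"
proof -
  have "[:-a,1:] ^ m * [:-b,1:] ^ k \<noteq> 0" by auto
  hence "Polynomial.order a ([:-a,1:] ^ m * [:-b,1:] ^ k) = Polynomial.order a ([:-a,1:] ^ m) + Polynomial.order a ([:-b,1:] ^ k)"
    by (rule order_mult)
  also have "Polynomial.order a ([:-b,1:] ^ k) = 0" using assms by (intro order_0I) auto
  finally show ?thesis by (simp add: order_power_n_n)
qed

lemma sum_delta_expand: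
  fixes f g :: "nat \<Rightarrow> nat \<Rightarrow> real"
  assumes "i < n" "k < n"
  shows "(\<Sum>l<n. (\<alpha> * (if i = l then 1 else 0) + \<beta> * f i l) * (\<gamma> * (if l = k then 1 else 0) + \<epsilon> * g l k))
    = \<alpha> * \<gamma> * (if i = k then 1 else 0) + \<alpha> * \<epsilon> * g i k + \<beta> * \<gamma> * f i k + \<beta> * \<epsilon> * (\<Sum>l<n. f i l * g l k)"
proof -
  have "(\<Sum>l<n. (\<alpha> * (if i = l then 1 else 0) + \<beta> * f i l) * (\<gamma> * (if l = k then 1 else 0) + \<epsilon> * g l k))
    = (\<Sum>l<n. (if l = i then (if i = k then \<alpha> * \<gamma> else 0) else 0) + (if l = i then \<alpha> * \<epsilon> * g l k else 0)
       + (if l = k then \<beta> * \<gamma> * f i l else 0) + \<beta> * \<epsilon> * (f i l * g l k))"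
    by (intro sum.cong refl) (auto simp: algebra_simps)
  also have "\<dots> = (\<Sum>l<n. (if l = i then (if i = k then \<alpha> * \<gamma> else 0) else 0)) + (\<Sum>l<n. (if l = i then \<alpha> * \<epsilon> * g l k else 0))
       + (\<Sum>l<n. (if l = k then \<beta> * \<gamma> * f i l else 0)) + (\<Sum>l<n. \<beta> * \<epsilon> * (f i l * g l k))"
    by (simp only: sum.distrib)
  also have "\<dots> = \<alpha> * \<gamma> * (if i = k then 1 else 0) + \<alpha> * \<epsilon> * g i k + \<beta> * \<gamma> * f i k + \<beta> * \<epsilon> * (\<Sum>l<n. f i l * g l k)"
    using assms by (simp add: sum.delta sum_distrib_left)
  finally show ?thesis .
qed

lemma edges_count:
  assumes sym: "\<forall>i j. E i j = E j i" and irrefl: "\<forall>i. \<not> E i i"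
  shows "(\<Sum>l<v. \<Sum>k<v. (if E l k then 1 else 0 :: real)) = 2 * real (num_edges v E)"
proof -
  define P where "P = {(l,k). l < v \<and> k < v \<and> E l k}"
  define P1 where "P1 = {(i,j). i < j \<and> j < v \<and> E i j}"
  define P2 where "P2 = {(i,j). j < i \<and> i < v \<and> E i j}"
  have fin: "finite P1" "finite P2" unfolding P1_def P2_def
    by (rule finite_subset[of _ "{..<v} \<times> {..<v}"], auto)+
  have "(\<Sum>l<v. \<Sum>k<v. (if E l k then 1 else 0 :: real)) = (\<Sum>p\<in>{..<v}\<times>{..<v}. if E (fst p) (snd p) then 1 else 0)"
    by (simp add: sum.cartesian_product split_beta)
  also have "\<dots> = real (card P)" unfolding P_def
    by (simp add: sum.If_cases Int_def) (intro arg_cong[where f = card] arg_cong[where f = real], auto)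
  also have "P = P1 \<union> P2" unfolding P_def P1_def P2_def using irrefl by auto (metis nat_neq_iff)
  also have "card (P1 \<union> P2) = card P1 + card P2"
    by (rule card_Un_disjoint[OF fin]) (auto simp: P1_def P2_def)
  also have "card P2 = card P1"
  proof -
    have "bij_betw (\<lambda>(i,j). (j,i)) P1 P2" unfolding P1_def P2_def using sym
      by (intro bij_betwI[where g = "\<lambda>(i,j). (j,i)"]) auto
    thus ?thesis by (simp add: bij_betw_same_card)
  qed
  finally show ?thesis unfolding num_edges_def P1_def by simp
qed


lemma quad_entry:
  fixes M :: "real mat"
  assumes M: "M \<in> carrier_mat n n" and that: "p < n" "q < n"
  shows "((M - a \<cdot>\<^sub>m 1\<^sub>m n) * (M - b \<cdot>\<^sub>m 1\<^sub>m n)) $$ (p,q) = (\<Sum>l<n. M$$(p,l) * M$$(l,q)) - (a+b) * M$$(p,q) + (if p = q then a*b else 0)"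
proof -
  have "((M - a \<cdot>\<^sub>m 1\<^sub>m n) * (M - b \<cdot>\<^sub>m 1\<^sub>m n)) $$ (p,q) = (\<Sum>l<n. (M$$(p,l) - a * (if p = l then 1 else 0)) * (M$$(l,q) - b * (if l = q then 1 else 0)))"
    using M that by (simp add: scalar_prod_def atLeast0LessThan)
  also have "\<dots> = (\<Sum>l<n. M$$(p,l) * M$$(l,q) - (if l = q then b * M$$(p,l) else 0)
      - (if l = p then a * M$$(l,q) else 0) + (if l = p then (if p = q then a*b else 0) else 0))"
    by (intro sum.cong refl) (auto simp: algebra_simps)
  also have "\<dots> = (\<Sum>l<n. M$$(p,l) * M$$(l,q)) - (\<Sum>l<n. (if l = q then b * M$$(p,l) else 0))
      - (\<Sum>l<n. (if l = p then a * M$$(l,q) else 0)) + (\<Sum>l<n. (if l = p then (if p = q then a*b else 0) else 0))"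
    by (simp only: sum.distrib sum_subtractf)
  also have "\<dots> = (\<Sum>l<n. M$$(p,l) * M$$(l,q)) - (a+b) * M$$(p,q) + (if p = q then a*b else 0)"
    using that by (simp add: sum.delta algebra_simps)
  finally show ?thesis .
qed

theorem lemma4:
  fixes v :: nat and E :: "nat \<Rightarrow> nat \<Rightarrow> bool" and \<sigma> \<tau> :: real
    and m\<sigma> m\<tau> e :: nat
  assumes sym: "\<forall>i j. E i j = E j i"
    and irrefl: "\<forall>i. \<not> E i i"
    and two_eigs: "{x. eigenvalue (seidel_mat v E) x} = {-1 - 2*\<sigma>, -1 - 2*\<tau>}"
    and distinct: "\<sigma> \<noteq> \<tau>"
    and m\<sigma>: "m\<sigma> = Polynomial.order (-1 - 2*\<sigma>) (char_poly (seidel_mat v E))"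
    and m\<tau>: "m\<tau> = Polynomial.order (-1 - 2*\<tau>) (char_poly (seidel_mat v E))"
    and e: "e = num_edges v E"
  shows "\<exists>\<rho>1 \<rho>2 :: real.
     has_spectrum (adj_mat v E)
       ({#\<rho>1, \<rho>2#} + replicate_mset (m\<sigma> - 1) \<sigma> + replicate_mset (m\<tau> - 1) \<tau>)
     \<and> m\<sigma> + m\<tau> = v
     \<and> real m\<sigma> * \<sigma> + real m\<tau> * \<tau> = - real v / 2
     \<and> real m\<sigma> * \<sigma>^2 + real m\<tau> * \<tau>^2 = (real v)^2 / 4
     \<and> \<rho>1 + \<rho>2 = \<sigma> + \<tau> + real v / 2
     \<and> \<sigma> + \<tau> + real v / 2 = -2 * \<sigma> * \<tau>
     \<and> \<rho>1^2 + \<rho>2^2 = \<sigma>^2 + \<tau>^2 + 2 * real e - (real v)^2 / 4"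
proof -
  define S where "S = seidel_mat v E"
  define A where "A = adj_mat v E"
  define t1 where "t1 = -1 - 2*\<sigma>"
  define t2 where "t2 = -1 - 2*\<tau>"
  have t12: "t1 \<noteq> t2" using distinct by (simp add: t1_def t2_def)
  have Sc: "S \<in> carrier_mat v v" and Ac: "A \<in> carrier_mat v v"
    by (auto simp: S_def A_def seidel_mat_def adj_mat_def)
  have Ae: "A $$ (i,j) = (if E i j then 1 else 0)" if "i < v" "j < v" for i j
    using that by (simp add: A_def adj_mat_def)
  have Se: "S $$ (i,j) = 1 - (if i = j then 1 else 0) - 2 * (if E i j then 1 else 0)" if "i < v" "j < v" for i j
    using that by (simp add: S_def seidel_mat_def adj_mat_def)
  have Ssym: "S $$ (i,j) = S $$ (j,i)" if "i < v" "j < v" for i j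
    using that sym by (auto simp: Se)
  have Asym: "A $$ (i,j) = A $$ (j,i)" if "i < v" "j < v" for i j
    using that sym by (auto simp: Ae)
  have ev1: "eigenvalue S t1" and ev2: "eigenvalue S t2"
    using two_eigs unfolding S_def t1_def t2_def by blast+
  have vpos: "v > 0" using eigenvalue_imp_nonzero_dim[OF Sc ev1] .
  obtain es where es: "char_poly S = (\<Prod>e\<leftarrow>es. [:-e, 1:])" "length es = v"
    using sym_split[OF Sc Ssym] by blast
  have root_iff: "poly (char_poly S) x = 0 \<longleftrightarrow> x \<in> set es" for x
    unfolding es by (simp add: poly_prod_list_zero_iff)
  have set_es: "set es \<subseteq> {t1, t2}"
  proof
    fix x assume "x \<in> set es"
    hence "eigenvalue S x" using eigenvalue_root_char_poly[OF Sc] root_iff by simp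
    thus "x \<in> {t1,t2}" using two_eigs unfolding S_def t1_def t2_def by blast
  qed
  define c1 where "c1 = length (filter ((=) t1) es)"
  define c2 where "c2 = length (filter ((=) t2) es)"
  note L2 = list_two[OF set_es t12, folded c1_def c2_def]
  have cpS: "char_poly S = [:-t1,1:] ^ c1 * [:-t2,1:] ^ c2" using L2(1) es by simp
  have c12: "c1 + c2 = v" using L2(2) es by simp
  have mc1: "m\<sigma> = c1" using m\<sigma> cpS order_two[OF t12] unfolding S_def t1_def by simp
  have mc2: "m\<tau> = c2" using m\<tau> cpS order_two[OF t12[symmetric], of c2 c1] unfolding S_def t2_def
    by (simp add: mult.commute)
  have c1pos: "c1 \<ge> 1"
  proof -
    have "t1 \<in> set es" using ev1 eigenvalue_root_char_poly[OF Sc] root_iff by simp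
    thus ?thesis unfolding c1_def by (metis One_nat_def Suc_leI filter_empty_conv length_greater_0_conv)
  qed
  have c2pos: "c2 \<ge> 1"
  proof -
    have "t2 \<in> set es" using ev2 eigenvalue_root_char_poly[OF Sc] root_iff by simp
    thus ?thesis unfolding c2_def by (metis One_nat_def Suc_leI filter_empty_conv length_greater_0_conv)
  qed
  have trS: "tr S = 0" using Sc irrefl by (simp add: tr_def Se)
  have SS_diag: "(\<Sum>l<v. S$$(i,l) * S$$(l,i)) = real v - 1" if "i < v" for i
  proof -
    have "(\<Sum>l<v. S$$(i,l) * S$$(l,i)) = (\<Sum>l<v. 1 - (if l = i then 1 else 0))"
      using that irrefl sym by (intro sum.cong refl) (auto simp: Se)
    also have "\<dots> = real v - 1" using that by (simp add: sum_subtractf sum.delta)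
    finally show ?thesis .
  qed
  have trSS: "tr (S * S) = real v * (real v - 1)"
    using Sc SS_diag by (simp add: tr_def scalar_prod_def atLeast0LessThan)
  note STr = schur_tr[OF Sc es(1)]
  have E2: "real c1 * t1 + real c2 * t2 = 0" using STr(1) trS L2(3)[of "\<lambda>x. x"] by simp
  have E3: "real c1 * t1^2 + real c2 * t2^2 = real v * (real v - 1)" using STr(2) trSS L2(3)[of "\<lambda>x. x^2"] by simp
  have N0: "(S - t1 \<cdot>\<^sub>m 1\<^sub>m v) * (S - t2 \<cdot>\<^sub>m 1\<^sub>m v) = 0\<^sub>m v v"
    by (rule schur_quad[OF Sc es(1) Ssym set_es])
  have SS: "(\<Sum>l<v. S$$(i,l) * S$$(l,k)) = (t1+t2) * S$$(i,k) - (if i = k then t1*t2 else 0)"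
    if "i < v" "k < v" for i k
  proof -
    have "((S - t1 \<cdot>\<^sub>m 1\<^sub>m v) * (S - t2 \<cdot>\<^sub>m 1\<^sub>m v)) $$ (i,k) = 0" using N0 that by simp
    thus ?thesis using quad_entry[OF Sc that, of t1 t2] by simp
  qed
  have E4: "real v - 1 + t1 * t2 = 0"
    using SS[OF vpos vpos] SS_diag[OF vpos] Se[OF vpos vpos] irrefl by simp
  have sumA: "(\<Sum>k<v. \<Sum>l<v. A$$(l,k)) = 2 * real e"
  proof -
    have "(\<Sum>k<v. \<Sum>l<v. A$$(l,k)) = (\<Sum>k<v. \<Sum>l<v. (if E k l then 1 else 0 :: real))"
      using sym by (intro sum.cong refl) (auto simp: Ae)
    also have "\<dots> = 2 * real e" using edges_count[OF sym irrefl] e by simp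
    finally show ?thesis .
  qed
  have sumS: "(\<Sum>k<v. \<Sum>l<v. S$$(l,k)) = real v * real v - real v - 4 * real e"
  proof -
    have "(\<Sum>k<v. \<Sum>l<v. S$$(l,k)) = (\<Sum>k<v. \<Sum>l<v. 1 - (if l = k then 1 else 0) - 2 * A$$(l,k))"
      by (intro sum.cong refl) (auto simp: Se Ae)
    also have "\<dots> = (\<Sum>k<v. real v - 1 - 2 * (\<Sum>l<v. A$$(l,k)))"
      by (intro sum.cong refl) (simp add: sum_subtractf sum.delta sum_distrib_left)
    also have "\<dots> = real v * real v - real v - 2 * (\<Sum>k<v. \<Sum>l<v. A$$(l,k))"
      by (simp add: sum_subtractf sum_distrib_left algebra_simps)
    finally show ?thesis using sumA by simp
  qed
  define q1 where "q1 = -(\<sigma>+\<tau>) - real v / 2"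
  define q0 where "q0 = \<sigma>*\<tau> + real v * (\<sigma>+\<tau>) / 2 + (real v)^2/4 - real e"
  have key: "poly (char_poly A) x = (x-\<sigma>)^(c1-1) * (x-\<tau>)^(c2-1) * (x^2 + q1*x + q0)"
    if xs: "x \<noteq> \<sigma>" and xt: "x \<noteq> \<tau>" for x
  proof -
    define d where "d = (x-\<sigma>)*(x-\<tau>)"
    have d0: "d \<noteq> 0" using xs xt by (simp add: d_def)
    define Mx where "Mx = mat v v (\<lambda>(i,j). (x+1/2) * (if i = j then 1 else 0) + 1/2 * S$$(i,j))"
    define Nx where "Nx = mat v v (\<lambda>(i,j). (x-\<sigma>-\<tau>-1/2) * (if i = j then 1 else 0) + (-1/2) * S$$(i,j))"
    define XA where "XA = - char_matrix A x"
    define U where "U = mat v 1 (\<lambda>_. 1::real)"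
    define W where "W = mat 1 v (\<lambda>(_,k). 1/2 * (\<Sum>l<v. Nx$$(l,k)))"
    have Mc: "Mx \<in> carrier_mat v v" "Nx \<in> carrier_mat v v" "XA \<in> carrier_mat v v"
      "U \<in> carrier_mat v 1" "W \<in> carrier_mat 1 v"
      using Ac by (auto simp: Mx_def Nx_def XA_def U_def W_def)
    have MN: "Mx * Nx = d \<cdot>\<^sub>m 1\<^sub>m v"
    proof (rule eq_matI)
      fix i k assume i: "i < dim_row (d \<cdot>\<^sub>m 1\<^sub>m v)" and k: "k < dim_col (d \<cdot>\<^sub>m 1\<^sub>m v)"
      hence i: "i < v" and k: "k < v" by auto
      have "(Mx * Nx) $$ (i,k) = (\<Sum>l<v. ((x+1/2) * (if i = l then 1 else 0) + 1/2 * S$$(i,l))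
          * ((x-\<sigma>-\<tau>-1/2) * (if l = k then 1 else 0) + (-1/2) * S$$(l,k)))"
        using i k by (simp add: Mx_def Nx_def scalar_prod_def atLeast0LessThan)
      also have "\<dots> = (x+1/2) * (x-\<sigma>-\<tau>-1/2) * (if i = k then 1 else 0) + (x+1/2) * (-1/2) * S$$(i,k)
          + 1/2 * (x-\<sigma>-\<tau>-1/2) * S$$(i,k) + 1/2 * (-1/2) * (\<Sum>l<v. S$$(i,l) * S$$(l,k))"
        by (rule sum_delta_expand[OF i k, of _ _ "\<lambda>i l. S$$(i,l)" _ _ "\<lambda>i l. S$$(i,l)"])
      also have "\<dots> = (d \<cdot>\<^sub>m 1\<^sub>m v) $$ (i,k)"
        using i k unfolding SS[OF i k] d_def t1_def t2_def by (simp add: algebra_simps)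
      finally show "(Mx * Nx) $$ (i,k) = (d \<cdot>\<^sub>m 1\<^sub>m v) $$ (i,k)" .
    qed (use Mc in auto)
    have XAe: "XA $$ (i,l) = Mx $$ (i,l) - 1/2" if "i < v" "l < v" for i l
      using that Ac by (auto simp: XA_def Mx_def char_matrix_def Se Ae)
    have XN: "XA * Nx = d \<cdot>\<^sub>m 1\<^sub>m v - U * W"
    proof (rule eq_matI)
      fix i k assume i: "i < dim_row (d \<cdot>\<^sub>m 1\<^sub>m v - U * W)" and k: "k < dim_col (d \<cdot>\<^sub>m 1\<^sub>m v - U * W)"
      hence i: "i < v" and k: "k < v" using Mc by auto
      have "(XA * Nx) $$ (i,k) = (\<Sum>l<v. XA$$(i,l) * Nx$$(l,k))"
        using i k Mc by (simp add: scalar_prod_def atLeast0LessThan)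
      also have "\<dots> = (\<Sum>l<v. Mx$$(i,l) * Nx$$(l,k)) - 1/2 * (\<Sum>l<v. Nx$$(l,k))"
        by (simp add: XAe i sum_subtractf sum_distrib_left algebra_simps)
      also have "(\<Sum>l<v. Mx$$(i,l) * Nx$$(l,k)) = (Mx * Nx) $$ (i,k)"
        using i k Mc by (simp add: scalar_prod_def atLeast0LessThan)
      also have "\<dots> = d * (if i = k then 1 else 0)" unfolding MN using i k by simp
      also have "d * (if i = k then 1 else 0) - 1/2 * (\<Sum>l<v. Nx$$(l,k)) = (d \<cdot>\<^sub>m 1\<^sub>m v - U * W) $$ (i,k)"
        using i k Mc by (simp add: U_def W_def scalar_prod_def)
      finally show "(XA * Nx) $$ (i,k) = (d \<cdot>\<^sub>m 1\<^sub>m v - U * W) $$ (i,k)" .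
    qed (use Mc in auto)
    have colN: "(\<Sum>l<v. Nx$$(l,k)) = (x-\<sigma>-\<tau>-1/2) - 1/2 * (\<Sum>l<v. S$$(l,k))" if "k < v" for k
    proof -
      have "(\<Sum>l<v. Nx$$(l,k)) = (\<Sum>l<v. (if l = k then (x-\<sigma>-\<tau>-1/2) else 0) - S$$(l,k)/2)"
        using that by (intro sum.cong refl) (auto simp: Nx_def)
      also have "\<dots> = (x-\<sigma>-\<tau>-1/2) - (\<Sum>l<v. S$$(l,k))/2"
        using that by (simp add: sum_subtractf sum_divide_distrib[symmetric] sum.delta)
      finally show ?thesis by simp
    qed
    have cdef: "(W * U) $$ (0,0) = 1/2 * real v * (x-\<sigma>-\<tau>) - (real v)^2/4 + real e"
    proof -
      have "(W * U) $$ (0,0) = (\<Sum>k<v. 1/2 * (\<Sum>l<v. Nx$$(l,k)))"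
        using Mc by (simp add: U_def W_def scalar_prod_def atLeast0LessThan)
      also have "\<dots> = (\<Sum>k<v. 1/2 * ((x-\<sigma>-\<tau>-1/2) - 1/2 * (\<Sum>l<v. S$$(l,k))))"
        by (intro sum.cong refl) (simp add: colN)
      also have "\<dots> = 1/2 * real v * (x-\<sigma>-\<tau>-1/2) - 1/4 * (\<Sum>k<v. \<Sum>l<v. S$$(l,k))"
        by (simp add: sum_subtractf sum_distrib_left[symmetric] sum_divide_distrib[symmetric] algebra_simps)
      also have "\<dots> = 1/2 * real v * (x-\<sigma>-\<tau>) - (real v)^2/4 + real e"
        unfolding sumS by (simp add: field_simps power2_eq_square)
      finally show ?thesis .
    qed
    define y where "y = -(2*x+1)"
    have Mx_eq: "Mx = (-1/2) \<cdot>\<^sub>m (- char_matrix S y)"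
      by (rule eq_matI) (use Sc in \<open>auto simp: Mx_def char_matrix_def y_def algebra_simps\<close>)
    have "det Mx = (-1/2)^v * poly (char_poly S) y"
      unfolding Mx_eq char_poly_matrix[OF Sc] using carrier_matD(2)[OF char_matrix_closed[OF Sc, of y]] by simp
    also have "poly (char_poly S) y = ((-2) * (x-\<sigma>))^c1 * ((-2)*(x-\<tau>))^c2"
      unfolding cpS by (simp add: y_def t1_def t2_def algebra_simps)
    also have "(-1/2::real)^v * (((-2) * (x-\<sigma>))^c1 * ((-2)*(x-\<tau>))^c2) = (x-\<sigma>)^c1 * (x-\<tau>)^c2"
    proof -
      have "(-1/2::real)^v = (-1/2)^c1 * (-1/2)^c2" using c12 by (simp add: power_add[symmetric])
      moreover have "(-1/2::real)^c1 * (-2)^c1 = 1" "(-1/2::real)^c2 * (-2)^c2 = 1"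
        by (simp_all add: power_mult_distrib[symmetric])
      moreover have "(-1/2::real)^c1 * (-1/2)^c2 * ((-2)^c1 * (x-\<sigma>)^c1 * ((-2)^c2 * (x-\<tau>)^c2))
         = ((-1/2)^c1 * (-2)^c1) * ((-1/2)^c2 * (-2)^c2) * ((x-\<sigma>)^c1 * (x-\<tau>)^c2)"
        by (simp only: mult_ac)
      ultimately show ?thesis by (simp only: power_mult_distrib)
    qed
    finally have dM: "det Mx = (x-\<sigma>)^c1 * (x-\<tau>)^c2" .
    have dMN: "det Mx * det Nx = d ^ v"
      using det_mult[OF Mc(1) Mc(2)] MN by simp
    have dXN: "det XA * det Nx * d = d ^ v * (d - (W * U) $$ (0,0))"
      using det_mult[OF Mc(3) Mc(2)] XN det_rank_one[OF Mc(4) Mc(5) d0] by simp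
    have dN0: "det Nx \<noteq> 0" using dMN d0 by auto
    have "det XA * d * det Nx = det XA * det Nx * d" by (simp only: mult_ac)
    also have "\<dots> = (det Mx * det Nx) * (d - (W * U) $$ (0,0))" unfolding dXN dMN ..
    also have "\<dots> = det Mx * (d - (W * U) $$ (0,0)) * det Nx" by (simp only: mult_ac)
    finally have "det XA * d * det Nx = det Mx * (d - (W * U) $$ (0,0)) * det Nx" .
    hence "det XA * d = det Mx * (d - (W * U) $$ (0,0))" using dN0 by simp
    also have "det Mx = (x-\<sigma>)^(c1-1) * (x-\<tau>)^(c2-1) * d"
    proof -
      have "c1 = Suc (c1 - 1)" "c2 = Suc (c2 - 1)" using c1pos c2pos by auto
      hence "(x-\<sigma>)^c1 * (x-\<tau>)^c2 = (x-\<sigma>)^(c1-1) * (x-\<tau>)^(c2-1) * ((x-\<sigma>)*(x-\<tau>))"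
        by (metis (no_types) mult.assoc mult.commute mult.left_commute power_Suc)
      thus ?thesis unfolding dM d_def .
    qed
    finally have "det XA * d = (x-\<sigma>)^(c1-1) * (x-\<tau>)^(c2-1) * d * (d - (W * U) $$ (0,0))" .
    hence "det XA * d = ((x-\<sigma>)^(c1-1) * (x-\<tau>)^(c2-1) * (d - (W * U) $$ (0,0))) * d"
      by (simp only: mult_ac)
    hence "det XA = (x-\<sigma>)^(c1-1) * (x-\<tau>)^(c2-1) * (d - (W * U) $$ (0,0))"
      using d0 by (metis mult_right_cancel)
    also have "d - (W * U) $$ (0,0) = x^2 + q1*x + q0"
      unfolding cdef d_def q1_def q0_def by (simp add: field_simps power2_eq_square)
    finally show ?thesis unfolding char_poly_matrix[OF Ac] XA_def .
  qed
  define qp where "qp = [:q0, q1, 1:]"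
  have qpoly: "poly qp x = x^2 + q1*x + q0" for x by (simp add: qp_def algebra_simps power2_eq_square)
  define T where "T = [:-\<sigma>,1:]^(c1-1) * [:-\<tau>,1:]^(c2-1) * qp"
  have cpA: "char_poly A = T"
  proof (rule ccontr)
    assume ne: "char_poly A \<noteq> T"
    hence "char_poly A - T \<noteq> 0" by simp
    hence fin: "finite {x. poly (char_poly A - T) x = 0}" by (rule poly_roots_finite)
    have "- {\<sigma>,\<tau>} \<subseteq> {x. poly (char_poly A - T) x = 0}"
      using key by (auto simp: T_def qpoly)
    hence "finite (- {\<sigma>,\<tau>})" using fin finite_subset by blast
    hence "finite ({\<sigma>,\<tau>} \<union> - {\<sigma>,\<tau>})" by simp
    thus False using infinite_UNIV_char_0[where ?'a = real] by simp
  qed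
  define D where "D = q1^2 - 4*q0"
  have D: "D \<ge> 0"
  proof (rule ccontr)
    assume "\<not> D \<ge> 0"
    hence Dn: "-D > 0" by simp
    define s where "s = sqrt (-D)"
    have s2: "s^2 = -D" unfolding s_def using Dn by simp
    have spos: "s > 0" unfolding s_def using Dn by simp
    define z where "z = Complex (-q1/2) (s/2)"
    interpret mp: map_poly_inj_comm_ring_hom "complex_of_real" ..
    have "poly (map_poly complex_of_real qp) z = 0"
    proof -
      have "poly (map_poly complex_of_real qp) z = complex_of_real q0 + z * (complex_of_real q1 + z)"
        by (simp add: qp_def)
      also have "\<dots> = 0" unfolding z_def complex_eq_iff
        using s2 by (simp add: D_def power2_eq_square field_simps)
      finally show ?thesis .
    qed
    hence "poly (map_poly complex_of_real (char_poly A)) z = 0"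
      unfolding cpA T_def by (simp add: mp.hom_mult)
    hence "Im z = 0" using sym_real_root[OF Ac Asym] by blast
    thus False using spos by (simp add: z_def)
  qed
  define r1 where "r1 = (-q1 + sqrt D)/2"
  define r2 where "r2 = (-q1 - sqrt D)/2"
  have sD: "(sqrt D)^2 = D" using D by simp
  have qfac: "qp = [:-r1,1:] * [:-r2,1:]"
  proof -
    have h0: "q0 = r1 * r2" unfolding r1_def r2_def using sD
      by (simp add: D_def field_simps power2_eq_square)
    have h1: "q1 = -r1 - r2" unfolding r1_def r2_def by (simp add: field_simps)
    show ?thesis unfolding qp_def h0 h1 by (simp add: algebra_simps)
  qed
  have cpA2: "char_poly A = [:-r1,1:] * [:-r2,1:] * [:-\<sigma>,1:]^(c1-1) * [:-\<tau>,1:]^(c2-1)"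
    unfolding cpA T_def qfac by (simp only: mult_ac)
  define as where "as = [r1, r2] @ replicate (c1-1) \<sigma> @ replicate (c2-1) \<tau>"
  have cpA3: "char_poly A = (\<Prod>a\<leftarrow>as. [:-a, 1:])"
    unfolding cpA2 as_def by (simp only: list.map map_append prod_list.append prod_list.Cons prod_list.Nil map_replicate prod_list_replicate mult_1_right mult_ac)
  note ATr = schur_tr[OF Ac cpA3]
  have trA: "tr A = 0" using Ac irrefl by (simp add: tr_def Ae)
  have trAA: "tr (A * A) = 2 * real e"
  proof -
    have "tr (A * A) = (\<Sum>i<v. \<Sum>l<v. A$$(i,l) * A$$(l,i))"
      using Ac by (simp add: tr_def scalar_prod_def atLeast0LessThan)
    also have "\<dots> = (\<Sum>i<v. \<Sum>l<v. (if E i l then 1 else 0 :: real))"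
      using sym by (intro sum.cong refl) (auto simp: Ae)
    also have "\<dots> = 2 * real e" using edges_count[OF sym irrefl] e by simp
    finally show ?thesis .
  qed
  have rc1: "real (c1 - 1) = real c1 - 1" and rc2: "real (c2 - 1) = real c2 - 1"
    using c1pos c2pos by auto
  have F1: "r1 + r2 + (real c1 - 1) * \<sigma> + (real c2 - 1) * \<tau> = 0"
    using ATr(1) trA rc1 rc2 by (simp add: as_def sum_list_replicate algebra_simps)
  have F2: "r1^2 + r2^2 + (real c1 - 1) * \<sigma>^2 + (real c2 - 1) * \<tau>^2 = 2 * real e"
    using ATr(2) trAA rc1 rc2 by (simp add: as_def sum_list_replicate map_replicate algebra_simps)
  have rv: "real c1 + real c2 = real v" using c12 by (metis of_nat_add)
  have G1: "real c1 * \<sigma> + real c2 * \<tau> = - real v / 2"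
    using E2 rv unfolding t1_def t2_def by (simp add: algebra_simps; linarith)
  have G2: "real c1 * \<sigma>^2 + real c2 * \<tau>^2 = (real v)^2 / 4"
  proof -
    have "real c1 * t1^2 + real c2 * t2^2 = (real c1 + real c2) + 4 * (real c1 * \<sigma> + real c2 * \<tau>)
        + 4 * (real c1 * \<sigma>^2 + real c2 * \<tau>^2)"
      unfolding t1_def t2_def by (simp add: power2_eq_square algebra_simps)
    thus ?thesis using E3 rv G1 by (simp add: power2_eq_square algebra_simps)
  qed
  have G3: "\<sigma> + \<tau> + real v / 2 = -2 * \<sigma> * \<tau>"
    using E4 unfolding t1_def t2_def by (simp add: algebra_simps; linarith)
  have spec: "has_spectrum (adj_mat v E)
       ({#r1, r2#} + replicate_mset (m\<sigma> - 1) \<sigma> + replicate_mset (m\<tau> - 1) \<tau>)"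
  proof -
    have Meq: "{#r1, r2#} + replicate_mset (c1-1) \<sigma> + replicate_mset (c2-1) \<tau> = mset as"
      by (simp add: as_def)
    have "(\<Prod>x\<in>#mset as. [:-x, 1:]) = (\<Prod>a\<leftarrow>as. [:-a, 1:])"
      by (simp only: mset_map[symmetric] prod_mset_prod_list)
    thus ?thesis unfolding has_spectrum_def A_def[symmetric] mc1 mc2 Meq cpA3 by simp
  qed
  show ?thesis
  proof (intro exI conjI)
    show "has_spectrum (adj_mat v E)
       ({#r1, r2#} + replicate_mset (m\<sigma> - 1) \<sigma> + replicate_mset (m\<tau> - 1) \<tau>)" by (rule spec)
    show "m\<sigma> + m\<tau> = v" using mc1 mc2 c12 by simp
    show "real m\<sigma> * \<sigma> + real m\<tau> * \<tau> = - real v / 2" using G1 mc1 mc2 by simp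
    show "real m\<sigma> * \<sigma>^2 + real m\<tau> * \<tau>^2 = (real v)^2 / 4" using G2 mc1 mc2 by simp
    show "r1 + r2 = \<sigma> + \<tau> + real v / 2" using F1 G1 by (simp add: algebra_simps; linarith)
    show "\<sigma> + \<tau> + real v / 2 = -2 * \<sigma> * \<tau>" by (rule G3)
    show "r1^2 + r2^2 = \<sigma>^2 + \<tau>^2 + 2 * real e - (real v)^2 / 4"
      using F2 G2 by (simp add: algebra_simps; linarith)
  qed
qed

end
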